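(* Let $\kappa$ be an uncountable cardinal with $\kappa^{<\kappa}=\kappa$. If $\mathfrak{d}_\kappa<{\rm cf}(2^\kappa)$, then $\mathrm{Gal}(\mathcal{D}_\kappa,2^\kappa,2^\kappa)$ holds.
   Context: $\mathcal{D}_\kappa$ is the club filter on $\kappa$. $\mathrm{Gal}(\mathcal{F},\mu,\lambda)$: for every $\mathcal{C}\subseteq\mathcal{F}$ with $|\mathcal{C}|=\lambda$ there is $\mathcal{E}\subseteq\mathcal{C}$ with $|\mathcal{E}|=\mu$ and $\bigcap\mathcal{E}\in\mathcal{F}$. For $f,g\in{}^\kappa\kappa$, $f\leq^*g$ means $|\{\alpha<\kappa\mid f(\alpha)>g(\alpha)\}|<\kappa$; $\mathfrak{d}_\kappa$ is the least size of a family $\mathcal{D}\subseteq{}^\kappa\kappa$ such that every $f\in{}^\kappa\kappa$ satisfies $f\leq^*g$ for some $g\in\mathcal{D}$. *)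

theory Defs
  imports Main "HOL-Library.FuncSet" "HOL-Library.Countable_Set"
begin

unbundle cardinal_syntax

text \<open>A cardinal kappa is represented by a cardinal order r (an initial ordinal) on
the set Field r; ordinals below kappa are the elements of Field r.\<close>

definition strict_less :: "'a rel \<Rightarrow> 'a \<Rightarrow> 'a \<Rightarrow> bool" where
  "strict_less r a b \<longleftrightarrow> (a, b) \<in> r \<and> a \<noteq> b"

definition unbounded_in :: "'a rel \<Rightarrow> 'a set \<Rightarrow> bool" where
  "unbounded_in r C \<longleftrightarrow> (\<forall>a\<in>Field r. \<exists>c\<in>C. strict_less r a c)"

definition closed_in :: "'a rel \<Rightarrow> 'a set \<Rightarrow> bool" where
  "closed_in r C \<longleftrightarrow> (\<forall>\<alpha>\<in>Field r.
      (C \<inter> underS r \<alpha> \<noteq> {} \<and>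
       (\<forall>\<beta>\<in>underS r \<alpha>. \<exists>\<gamma>\<in>C \<inter> underS r \<alpha>. strict_less r \<beta> \<gamma>))
      \<longrightarrow> \<alpha> \<in> C)"

definition club :: "'a rel \<Rightarrow> 'a set \<Rightarrow> bool" where
  "club r C \<longleftrightarrow> C \<subseteq> Field r \<and> unbounded_in r C \<and> closed_in r C"

definition club_filter :: "'a rel \<Rightarrow> 'a set set" where
  "club_filter r = {X. X \<subseteq> Field r \<and> (\<exists>C. club r C \<and> C \<subseteq> X)}"

text \<open>Gal(F, mu, lambda), cardinals mu and lambda given as cardinalities of sets.\<close>
definition Gal :: "'a set set \<Rightarrow> 'b set \<Rightarrow> 'c set \<Rightarrow> bool" where
  "Gal F M L \<longleftrightarrow> (\<forall>C. C \<subseteq> F \<and> |C| =o |L| \<longrightarrow>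
      (\<exists>E. E \<subseteq> C \<and> |E| =o |M| \<and> \<Inter>E \<in> F))"

text \<open>kappa^{<kappa}: the set of all functions alpha -> kappa for alpha < kappa (tagged by alpha).\<close>
definition short_functions :: "'a rel \<Rightarrow> ('a \<times> ('a \<Rightarrow> 'a)) set" where
  "short_functions r = Sigma (Field r) (\<lambda>\<alpha>. underS r \<alpha> \<rightarrow>\<^sub>E Field r)"

definition le_star :: "'a rel \<Rightarrow> ('a \<Rightarrow> 'a) \<Rightarrow> ('a \<Rightarrow> 'a) \<Rightarrow> bool" where
  "le_star r f g \<longleftrightarrow> |{\<alpha>\<in>Field r. strict_less r (g \<alpha>) (f \<alpha>)}| <o |Field r|"

definition dominating :: "'a rel \<Rightarrow> ('a \<Rightarrow> 'a) set \<Rightarrow> bool" where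
  "dominating r D \<longleftrightarrow> D \<subseteq> (Field r \<rightarrow>\<^sub>E Field r) \<and>
     (\<forall>f\<in>Field r \<rightarrow>\<^sub>E Field r. \<exists>g\<in>D. le_star r f g)"

definition cofinal_subset :: "'b rel \<Rightarrow> 'b set \<Rightarrow> bool" where
  "cofinal_subset w S \<longleftrightarrow> S \<subseteq> Field w \<and> (\<forall>x\<in>Field w. \<exists>y\<in>S. (x, y) \<in> w)"

text \<open>d_kappa < cf(2^kappa): some dominating family is strictly smaller than every cofinal
subset of the initial ordinal 2^kappa (= card_of (Pow kappa)).\<close>
definition d_less_cf_pow :: "'a rel \<Rightarrow> bool" where
  "d_less_cf_pow r \<longleftrightarrow> (\<exists>D. dominating r D \<and>
     (\<forall>S. cofinal_subset (card_of (Pow (Field r))) S \<longrightarrow> |D| <o |S| ))"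

end

theory Submission
  imports Defs
begin

lemma fin_less: "finite A \<Longrightarrow> infinite C \<Longrightarrow> |A| <o |C|"
  by (rule finite_ordLess_infinite) (auto simp: card_of_well_order_on Field_card_of)

lemma times_less:
  assumes C: "infinite C" and A: "|A| <o |C|" and B: "|B| <o |C|"
  shows "|A \<times> B| <o |C|"
proof (cases "finite A \<and> finite B")
  case True
  then have "finite (A \<times> B)" by simp
  then show ?thesis using C by (rule fin_less)
next
  case False
  show ?thesis
  proof (cases "A = {} \<or> B = {}")
    case True
    then have "finite (A \<times> B)" by auto
    then show ?thesis using C by (rule fin_less)
  next
    case ne: False
    have "|A| \<le>o |B| \<or> |B| \<le>o |A|" by (rule ordLeq_total) (rule card_of_Well_order)+
    then show ?thesis
    proof
      assume le: "|A| \<le>o |B|"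
      then have "infinite B" using False card_of_ordLeq_finite[OF le] by blast
      then have "|A \<times> B| =o |B|" using card_of_Times_infinite[of B A] le ne by blast
      then show ?thesis using B by (rule ordIso_ordLess_trans)
    next
      assume le: "|B| \<le>o |A|"
      then have "infinite A" using False card_of_ordLeq_finite[OF le] by blast
      then have "|A \<times> B| =o |A|" using card_of_Times_infinite[of A B] le ne by blast
      then show ?thesis using A by (rule ordIso_ordLess_trans)
    qed
  qed
qed

lemma under_less:
  assumes r: "Card_order r" and inf: "infinite (Field r)" and a: "a \<in> Field r"
  shows "|under r a| <o |Field r|"
proof -
  have wo: "Well_order r" using r card_order_on_well_order_on by blast
  have "under r a \<subseteq> insert a (underS r a)" unfolding under_def underS_def by auto
  then have 1: "|under r a| \<le>o |{a} \<union> underS r a|" by (simp add: card_of_mono1)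
  have "|underS r a| <o |Field r|"
    using card_of_underS[OF r a] card_of_Field_ordIso[OF r] ordLess_ordIso_trans ordIso_symmetric by blast
  moreover have "|{a}| <o |Field r|"
    using inf fin_less by blast
  ultimately have "|{a} \<union> underS r a| <o |Field r|" using card_of_Un_ordLess_infinite inf by blast
  then show ?thesis using 1 ordLeq_ordLess_trans by blast
qed

lemma small_below:
  assumes r: "Card_order r" and X: "|X| <o |Field r|"
  shows "\<exists>\<alpha>\<in>Field r. |X| \<le>o |underS r \<alpha>|"
proof -
  have wo: "Well_order r" using r card_order_on_well_order_on by blast
  have "|X| <o r" using X card_of_Field_ordIso[OF r] ordLess_ordIso_trans by blast
  then obtain \<alpha> where a: "\<alpha> \<in> Field r" and iso: "|X| =o Restr r (underS r \<alpha>)"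
    using ordLess_iff_ordIso_Restr[OF wo card_of_Well_order] by blast
  have "Field (Restr r (underS r \<alpha>)) = underS r \<alpha>"
    using wo wo_rel.underS_ofilter Field_Restr_ofilter unfolding wo_rel_def by fastforce
  then have "|X| \<le>o |underS r \<alpha>|"
    using card_of_mono2[OF ordIso_imp_ordLeq[OF iso]] by (simp add: Field_card_of)
  then show ?thesis using a by blast
qed


lemma wo_total_le:
  assumes wo: "Well_order r" and a: "a \<in> Field r" and b: "b \<in> Field r" and n: "a \<notin> underS r b"
  shows "(b, a) \<in> r"
proof (cases "a = b")
  case True
  then show ?thesis using wo a unfolding order_on_defs refl_on_def by blast
next
  case False
  have "total_on (Field r) r" using wo unfolding order_on_defs by blast
  then have "(a, b) \<in> r \<or> (b, a) \<in> r" using a b False unfolding total_on_def by blast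
  then show ?thesis using n False unfolding underS_def by blast
qed

lemma regular:
  assumes r: "Card_order r" and inf: "infinite (Field r)"
    and sf: "|short_functions r| =o |Field r|"
    and XK: "X \<subseteq> Field r" and X: "|X| <o |Field r|"
  shows "\<exists>a\<in>Field r. X \<subseteq> underS r a"
proof (rule ccontr)
  let ?K = "Field r"
  assume nb: "\<not> (\<exists>a\<in>Field r. X \<subseteq> underS r a)"
  have wo: "Well_order r" using r card_order_on_well_order_on by blast
  obtain \<alpha> where a: "\<alpha> \<in> ?K" and le: "|X| \<le>o |underS r \<alpha>|"
    using small_below[OF r X] by blast
  obtain k0 where k0: "k0 \<in> ?K" using infinite_imp_nonempty[OF inf] by blast
  have Xne: "X \<noteq> {}" using nb k0 by blast
  obtain \<pi> where pi: "\<pi> ` underS r \<alpha> = X" using iffD2[OF card_of_ordLeq2[OF Xne] le] by blast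
  let ?FS = "underS r \<alpha> \<rightarrow>\<^sub>E ?K"
  have "inj_on (\<lambda>f. (\<alpha>, f)) ?FS \<and> (\<lambda>f. (\<alpha>, f)) ` ?FS \<subseteq> short_functions r"
    using a unfolding short_functions_def inj_on_def by auto
  then have "\<exists>f. inj_on f ?FS \<and> f ` ?FS \<subseteq> short_functions r" by blast
  then have "|?FS| \<le>o |short_functions r|" by (rule iffD1[OF card_of_ordLeq])
  then have FSle: "|?FS| \<le>o |?K|" using sf by (rule ordLeq_ordIso_trans)
  have FSne: "?FS \<noteq> {}"
  proof -
    have "(\<lambda>i\<in>underS r \<alpha>. k0) \<in> ?FS" using k0 by auto
    then show ?thesis by blast
  qed
  obtain F where F: "F ` ?K = ?FS" using iffD2[OF card_of_ordLeq2[OF FSne] FSle] by blast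
  define T where "T i = (\<lambda>\<xi>. F \<xi> i) ` under r (\<pi> i)" for i
  have Tne: "\<exists>y. y \<in> ?K \<and> y \<notin> T i" if i: "i \<in> underS r \<alpha>" for i
  proof (rule ccontr)
    assume "\<not> (\<exists>y. y \<in> ?K \<and> y \<notin> T i)"
    then have "?K \<subseteq> T i" by blast
    then have 1: "|?K| \<le>o |T i|" by (rule card_of_mono1)
    have "|T i| \<le>o |under r (\<pi> i)|" unfolding T_def by (rule card_of_image)
    then have 2: "|?K| \<le>o |under r (\<pi> i)|" by (rule ordLeq_transitive[OF 1])
    have "\<pi> i \<in> ?K" using pi i XK by blast
    then have "|under r (\<pi> i)| <o |?K|" by (rule under_less[OF r inf])
    with 2 have "|?K| <o |?K|" by (rule ordLeq_ordLess_trans)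
    then show False using ordLess_irreflexive by blast
  qed
  define h where "h = (\<lambda>i\<in>underS r \<alpha>. SOME y. y \<in> ?K \<and> y \<notin> T i)"
  have hi: "h i \<in> ?K \<and> h i \<notin> T i" if "i \<in> underS r \<alpha>" for i
    using someI_ex[OF Tne[OF that]] that unfolding h_def by simp
  have "h \<in> ?FS" using hi unfolding h_def by auto
  then obtain \<xi> where xi: "\<xi> \<in> ?K" "F \<xi> = h" using F by (metis imageE)
  obtain x where x: "x \<in> X" "x \<notin> underS r \<xi>" using nb xi(1) by blast
  have "x \<in> ?K" using x XK by blast
  then have "(\<xi>, x) \<in> r" using wo_total_le[OF wo _ xi(1) x(2)] by blast
  then have xu: "\<xi> \<in> under r x" unfolding under_def by simp
  obtain i where i: "i \<in> underS r \<alpha>" "\<pi> i = x" using pi x by blast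
  have "F \<xi> i \<in> T i" unfolding T_def using xu i by blast
  then show False using hi[OF i(1)] xi by simp
qed


definition reg :: "'a rel \<Rightarrow> bool" where
  "reg r \<longleftrightarrow> Card_order r \<and> \<not> countable (Field r) \<and>
     (\<forall>X. X \<subseteq> Field r \<and> |X| <o |Field r| \<longrightarrow> (\<exists>a\<in>Field r. X \<subseteq> underS r a))"

definition club_of :: "'a rel \<Rightarrow> ('a \<Rightarrow> 'a) \<Rightarrow> 'a \<Rightarrow> 'a set" where
  "club_of r g \<beta> = {\<alpha> \<in> Field r. strict_less r \<beta> \<alpha> \<and>
     (\<forall>\<xi>. strict_less r \<xi> \<alpha> \<longrightarrow> strict_less r (g \<xi>) \<alpha>)}"

lemma reg_wo: "reg r \<Longrightarrow> wo_rel r"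
  unfolding reg_def wo_rel_def using card_order_on_well_order_on by blast

lemma sl_field: "strict_less r a b \<Longrightarrow> a \<in> Field r \<and> b \<in> Field r"
  unfolding strict_less_def by (auto simp: FieldI1 FieldI2)

lemma sl_underS: "strict_less r a b \<longleftrightarrow> a \<in> underS r b"
  unfolding strict_less_def underS_def by auto

lemma slD: "strict_less r a b \<Longrightarrow> a \<in> underS r b"
  by (simp add: sl_underS)

lemma slI: "a \<in> underS r b \<Longrightarrow> strict_less r a b"
  by (simp add: sl_underS)

lemma sl_le_trans:
  assumes w: "wo_rel r" and ab: "strict_less r a b" and bc: "(b, c) \<in> r"
  shows "strict_less r a c"
proof -
  have t: "trans r" using wo_rel.TRANS[OF w] .
  have an: "antisym r" using wo_rel.ANTISYM[OF w] .
  have 1: "(a, b) \<in> r" "a \<noteq> b" using ab unfolding strict_less_def by auto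
  have 2: "(a, c) \<in> r" using transD[OF t 1(1) bc] .
  have "a \<noteq> c"
  proof
    assume "a = c"
    then have "(b, a) \<in> r" using bc by simp
    then show False using antisymD[OF an 1(1)] 1(2) by blast
  qed
  then show ?thesis using 2 unfolding strict_less_def by blast
qed

lemma le_sl_trans:
  assumes w: "wo_rel r" and ab: "(a, b) \<in> r" and bc: "strict_less r b c"
  shows "strict_less r a c"
proof -
  have t: "trans r" using wo_rel.TRANS[OF w] .
  have an: "antisym r" using wo_rel.ANTISYM[OF w] .
  have 1: "(b, c) \<in> r" "b \<noteq> c" using bc unfolding strict_less_def by auto
  have 2: "(a, c) \<in> r" using transD[OF t ab 1(1)] .
  have "a \<noteq> c"
  proof
    assume "a = c"
    then have "(c, b) \<in> r" using ab by simp
    then show False using antisymD[OF an 1(1)] 1(2) by blast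
  qed
  then show ?thesis using 2 unfolding strict_less_def by blast
qed

lemma sl_trans: "wo_rel r \<Longrightarrow> strict_less r a b \<Longrightarrow> strict_less r b c \<Longrightarrow> strict_less r a c"
  by (rule sl_le_trans) (auto simp: strict_less_def)

lemma not_sl:
  assumes w: "wo_rel r" and a: "a \<in> Field r" and b: "b \<in> Field r" and n: "\<not> strict_less r a b"
  shows "(b, a) \<in> r"
proof -
  have w': "Well_order r" using w unfolding wo_rel_def .
  have n': "a \<notin> underS r b" using n unfolding strict_less_def underS_def by auto
  show ?thesis by (rule wo_total_le[OF w' a b n'])
qed

lemma sl_not_le:
  assumes w: "wo_rel r" and ab: "strict_less r a b"
  shows "(b, a) \<notin> r"
proof
  assume ba: "(b, a) \<in> r"
  have an: "antisym r" using wo_rel.ANTISYM[OF w] .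
  have 1: "(a, b) \<in> r" "a \<noteq> b" using ab unfolding strict_less_def by auto
  have "a = b" using antisymD[OF an 1(1) ba] .
  then show False using 1(2) by simp
qed

lemma reg_bound: "reg r \<Longrightarrow> X \<subseteq> Field r \<Longrightarrow> |X| <o |Field r| \<Longrightarrow> \<exists>a\<in>Field r. X \<subseteq> underS r a"
  unfolding reg_def by blast

lemma cnt_iff: "countable X \<longleftrightarrow> |X| \<le>o |UNIV :: nat set|"
  unfolding countable_def card_of_ordLeq[symmetric] by blast

lemma reg_countable:
  assumes "reg r" "X \<subseteq> Field r" "countable X"
  shows "\<exists>a\<in>Field r. X \<subseteq> underS r a"
proof -
  have 1: "|X| \<le>o |UNIV :: nat set|" using assms(3) cnt_iff by blast
  have "\<not> countable (Field r)" using assms(1) unfolding reg_def by blast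
  then have "\<not> |Field r| \<le>o |UNIV :: nat set|" using cnt_iff by blast
  then have "|UNIV :: nat set| <o |Field r|"
    using not_ordLeq_iff_ordLess[OF card_of_Well_order card_of_Well_order] by blast
  with 1 have "|X| <o |Field r|" by (rule ordLeq_ordLess_trans)
  then show ?thesis using reg_bound[OF assms(1,2)] by blast
qed

lemma reg_inf: "reg r \<Longrightarrow> infinite (Field r)"
  unfolding reg_def using countable_finite by blast

lemma club_of_club:
  assumes R: "reg r" and g: "\<forall>\<xi>\<in>Field r. g \<xi> \<in> Field r" and b: "\<beta> \<in> Field r"
  shows "club r (club_of r g \<beta>)"
proof -
  let ?K = "Field r"
  have wo: "wo_rel r" using reg_wo[OF R] .
  have cr: "Card_order r" using R unfolding reg_def by blast
  have inf: "infinite ?K" using reg_inf[OF R] .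
  have sub: "club_of r g \<beta> \<subseteq> ?K" unfolding club_of_def by auto
  have closed: "closed_in r (club_of r g \<beta>)"
    unfolding closed_in_def
  proof (intro ballI impI)
    fix \<alpha> assume a: "\<alpha> \<in> ?K"
      and h: "club_of r g \<beta> \<inter> underS r \<alpha> \<noteq> {} \<and>
       (\<forall>\<beta>'\<in>underS r \<alpha>. \<exists>\<gamma>\<in>club_of r g \<beta> \<inter> underS r \<alpha>. strict_less r \<beta>' \<gamma>)"
    have "club_of r g \<beta> \<inter> underS r \<alpha> \<noteq> {}" using h by (rule conjunct1)
    then obtain \<gamma> where c0: "\<gamma> \<in> club_of r g \<beta>" "\<gamma> \<in> underS r \<alpha>" by blast
    have c: "\<gamma> \<in> club_of r g \<beta>" "strict_less r \<gamma> \<alpha>" using c0(1) slI[OF c0(2)] by auto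
    have "strict_less r \<beta> \<gamma>" using c(1) unfolding club_of_def by blast
    then have 1: "strict_less r \<beta> \<alpha>" using c(2) by (rule sl_trans[OF wo])
    have 2: "strict_less r (g \<xi>) \<alpha>" if "strict_less r \<xi> \<alpha>" for \<xi>
    proof -
      have xu: "\<xi> \<in> underS r \<alpha>" using slD[OF that] .
      have "\<forall>\<beta>'\<in>underS r \<alpha>. \<exists>\<gamma>\<in>club_of r g \<beta> \<inter> underS r \<alpha>. strict_less r \<beta>' \<gamma>"
        using h by (rule conjunct2)
      then have "\<exists>\<gamma>\<in>club_of r g \<beta> \<inter> underS r \<alpha>. strict_less r \<xi> \<gamma>" using xu by (rule bspec)
      then obtain \<delta> where d: "\<delta> \<in> club_of r g \<beta>" "\<delta> \<in> underS r \<alpha>" "strict_less r \<xi> \<delta>"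
        by blast
      then have "strict_less r (g \<xi>) \<delta>" unfolding club_of_def by blast
      moreover have "strict_less r \<delta> \<alpha>" using slI[OF d(2)] .
      ultimately show ?thesis by (rule sl_trans[OF wo])
    qed
    show "\<alpha> \<in> club_of r g \<beta>" unfolding club_of_def using a 1 2 by blast
  qed
  have unb: "unbounded_in r (club_of r g \<beta>)"
    unfolding unbounded_in_def
  proof
    fix a assume a: "a \<in> ?K"
    define S where "S x = g ` underS r x \<union> {x, \<beta>}" for x
    have Sex: "\<exists>y\<in>?K. S x \<subseteq> underS r y" if x: "x \<in> ?K" for x
    proof -
      have "g ` underS r x \<subseteq> ?K"
      proof
        fix y assume "y \<in> g ` underS r x"
        then obtain z where z: "z \<in> underS r x" "y = g z" by blast
        have "z \<in> ?K" using z(1) unfolding underS_def by (auto intro: FieldI1)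
        then show "y \<in> ?K" using g z(2) by blast
      qed
      then have "S x \<subseteq> ?K" unfolding S_def using x b by blast
      moreover have "|S x| <o |?K|"
      proof -
        have "|underS r x| <o |?K|"
          using card_of_underS[OF cr x] ordIso_symmetric[OF card_of_Field_ordIso[OF cr]] by (rule ordLess_ordIso_trans)
        then have 1: "|g ` underS r x| <o |?K|" using card_of_image by (rule ordLeq_ordLess_trans[rotated])
        have 2: "|{x, \<beta>}| <o |?K|" by (rule fin_less[OF _ inf]) simp
        show ?thesis unfolding S_def by (rule card_of_Un_ordLess_infinite[OF inf 1 2])
      qed
      ultimately show ?thesis by (rule reg_bound[OF R])
    qed
    define nx where "nx x = (SOME y. y \<in> ?K \<and> S x \<subseteq> underS r y)" for x
    have nx: "nx x \<in> ?K \<and> S x \<subseteq> underS r (nx x)" if "x \<in> ?K" for x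
      using someI_ex[of "\<lambda>y. y \<in> ?K \<and> S x \<subseteq> underS r y"] Sex[OF that] unfolding nx_def by blast
    define sq where "sq n = (nx ^^ n) a" for n
    have sqSuc: "sq (Suc n) = nx (sq n)" for n by (simp add: sq_def)
    have sqK: "sq n \<in> ?K" for n
    proof (induction n)
      case 0
      then show ?case using a by (simp add: sq_def)
    next
      case (Suc n)
      then show ?case unfolding sqSuc using nx by blast
    qed
    have sqS: "S (sq n) \<subseteq> underS r (sq (Suc n))" for n
      using nx[OF sqK[of n]] unfolding sqSuc by blast
    have "range sq \<subseteq> ?K" using sqK by blast
    then obtain u where u: "u \<in> ?K" "range sq \<subseteq> underS r u"
      using reg_countable[OF R _ countable_image[OF countableI_type]] by blast
    define UB where "UB = {y \<in> ?K. \<forall>n. (sq n, y) \<in> r}"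
    have "u \<in> UB" using u unfolding UB_def underS_def by blast
    then have UBne: "UB \<noteq> {}" by blast
    have UBK: "UB \<subseteq> ?K" unfolding UB_def by blast
    define \<alpha> where "\<alpha> = wo_rel.minim r UB"
    have aUB: "\<alpha> \<in> UB" unfolding \<alpha>_def using wo_rel.minim_in[OF wo UBK UBne] .
    have aleast: "(\<alpha>, y) \<in> r" if "y \<in> UB" for y
      unfolding \<alpha>_def using wo_rel.minim_least[OF wo UBK that] .
    have sl_sq: "strict_less r z (sq (Suc n))" if "z \<in> S (sq n)" for z n
    proof -
      have "z \<in> underS r (sq (Suc n))" using sqS[of n] that by blast
      then show ?thesis by (rule slI)
    qed
    have sq_le: "(sq n, \<alpha>) \<in> r" for n using aUB unfolding UB_def by blast
    have aK: "\<alpha> \<in> ?K" using aUB UBK by blast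
    have A1: "strict_less r a \<alpha>"
    proof -
      have "a \<in> S (sq 0)" by (simp add: S_def sq_def)
      then have "strict_less r a (sq (Suc 0))" by (rule sl_sq)
      then show ?thesis using sq_le[of "Suc 0"] by (rule sl_le_trans[OF wo])
    qed
    have A2: "strict_less r \<beta> \<alpha>"
    proof -
      have "\<beta> \<in> S (sq 0)" by (simp add: S_def sq_def)
      then have "strict_less r \<beta> (sq (Suc 0))" by (rule sl_sq)
      then show ?thesis using sq_le[of "Suc 0"] by (rule sl_le_trans[OF wo])
    qed
    have A3: "strict_less r (g \<xi>) \<alpha>" if xi: "strict_less r \<xi> \<alpha>" for \<xi>
    proof -
      have xK: "\<xi> \<in> ?K" using sl_field[OF xi] by blast
      have "\<xi> \<notin> UB"
      proof
        assume "\<xi> \<in> UB"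
        then have "(\<alpha>, \<xi>) \<in> r" by (rule aleast)
        with sl_not_le[OF wo xi] show False by contradiction
      qed
      then obtain n where nr: "(sq n, \<xi>) \<notin> r" unfolding UB_def using xK by blast
      have ns: "\<not> strict_less r (sq n) \<xi>" using nr unfolding strict_less_def by blast
      have le: "(\<xi>, sq n) \<in> r" using not_sl[OF wo sqK[of n] xK ns] .
      have rx: "(\<xi>, \<xi>) \<in> r" by (rule refl_onD[OF wo_rel.REFL[OF wo] xK])
      have "\<xi> \<noteq> sq n"
      proof
        assume "\<xi> = sq n"
        then have "(sq n, \<xi>) \<in> r" using rx by simp
        with nr show False by contradiction
      qed
      then have "strict_less r \<xi> (sq n)" using le unfolding strict_less_def by blast
      then have "\<xi> \<in> underS r (sq n)" by (rule slD)
      then have "g \<xi> \<in> g ` underS r (sq n)" by (rule imageI)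
      then have "g \<xi> \<in> S (sq n)" unfolding S_def by (rule UnI1)
      then have "strict_less r (g \<xi>) (sq (Suc n))" by (rule sl_sq)
      then show ?thesis using sq_le[of "Suc n"] by (rule sl_le_trans[OF wo])
    qed
    have "\<alpha> \<in> club_of r g \<beta>" unfolding club_of_def using aK A2 A3 by blast
    then show "\<exists>c\<in>club_of r g \<beta>. strict_less r a c" using A1 by blast
  qed
  show ?thesis unfolding club_def using sub closed unb by blast
qed


lemma club_dom:
  assumes R: "reg r" and D: "dominating r D" and C: "club r C"
  shows "\<exists>g\<in>D. \<exists>\<beta>\<in>Field r. club_of r g \<beta> \<subseteq> C"
proof -
  let ?K = "Field r"
  have wo: "wo_rel r" using reg_wo[OF R] .
  have CK: "C \<subseteq> ?K" and unb: "unbounded_in r C" and cl: "closed_in r C"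
    using C unfolding club_def by blast+
  define N where "N \<xi> = {\<gamma> \<in> C. strict_less r \<xi> \<gamma>}" for \<xi>
  have NK: "N \<xi> \<subseteq> ?K" for \<xi> using CK unfolding N_def by blast
  have Nne: "N \<xi> \<noteq> {}" if "\<xi> \<in> ?K" for \<xi> using unb that unfolding unbounded_in_def N_def by blast
  define f where "f = (\<lambda>\<xi>\<in>?K. wo_rel.minim r (N \<xi>))"
  have fN: "f \<xi> \<in> N \<xi>" if "\<xi> \<in> ?K" for \<xi>
    using wo_rel.minim_in[OF wo NK Nne[OF that]] that unfolding f_def by simp
  have fC: "f \<xi> \<in> C" and fsl: "strict_less r \<xi> (f \<xi>)" if "\<xi> \<in> ?K" for \<xi>
    using fN[OF that] unfolding N_def by blast+
  have fF: "f \<in> ?K \<rightarrow>\<^sub>E ?K" using fC CK unfolding f_def by auto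
  obtain g where gD: "g \<in> D" and fg: "le_star r f g" using D fF unfolding dominating_def by blast
  have gK: "g \<xi> \<in> ?K" if "\<xi> \<in> ?K" for \<xi> using gD D that unfolding dominating_def by blast
  define E where "E = {\<alpha> \<in> ?K. strict_less r (g \<alpha>) (f \<alpha>)}"
  have "|E| <o |?K|" using fg unfolding le_star_def E_def .
  moreover have "E \<subseteq> ?K" unfolding E_def by blast
  ultimately obtain \<beta> where b: "\<beta> \<in> ?K" "E \<subseteq> underS r \<beta>" using reg_bound[OF R] by blast
  have fle: "(f \<xi>, g \<xi>) \<in> r" if x: "\<xi> \<in> ?K" "\<not> strict_less r \<xi> \<beta>" for \<xi>
  proof -
    have "\<xi> \<notin> E"
    proof
      assume "\<xi> \<in> E"
      then have "\<xi> \<in> underS r \<beta>" using b(2) by (rule subsetD[rotated])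
      then have "strict_less r \<xi> \<beta>" by (rule slI)
      with x(2) show False by contradiction
    qed
    then have "\<not> strict_less r (g \<xi>) (f \<xi>)" using x(1) unfolding E_def by blast
    then show ?thesis using not_sl[OF wo gK[OF x(1)] fC[OF x(1), THEN subsetD[OF CK]]] by blast
  qed
  have "club_of r g \<beta> \<subseteq> C"
  proof
    fix \<alpha> assume a: "\<alpha> \<in> club_of r g \<beta>"
    have aK: "\<alpha> \<in> ?K" and ba: "strict_less r \<beta> \<alpha>"
      and cls: "\<And>\<xi>. strict_less r \<xi> \<alpha> \<Longrightarrow> strict_less r (g \<xi>) \<alpha>"
      using a unfolding club_of_def by blast+
    have key: "f \<xi> \<in> C \<and> strict_less r \<xi> (f \<xi>) \<and> strict_less r (f \<xi>) \<alpha>"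
      if x: "strict_less r \<xi> \<alpha>" "\<not> strict_less r \<xi> \<beta>" for \<xi>
    proof -
      have xK: "\<xi> \<in> ?K" using sl_field[OF x(1)] by blast
      have "strict_less r (f \<xi>) \<alpha>" using le_sl_trans[OF wo fle[OF xK x(2)] cls[OF x(1)]] .
      then show ?thesis using fC[OF xK] fsl[OF xK] by (intro conjI)
    qed
    have bnot: "\<not> strict_less r \<beta> \<beta>" unfolding strict_less_def by blast
    have kb: "f \<beta> \<in> C" "strict_less r \<beta> (f \<beta>)" "strict_less r (f \<beta>) \<alpha>"
      using key[OF ba bnot] by blast+
    have kbu: "f \<beta> \<in> C \<inter> underS r \<alpha>" using kb(1) slD[OF kb(3)] by (rule IntI)
    then have 1: "C \<inter> underS r \<alpha> \<noteq> {}" by blast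
    have 2: "\<exists>\<gamma>\<in>C \<inter> underS r \<alpha>. strict_less r \<beta>' \<gamma>" if b': "\<beta>' \<in> underS r \<alpha>" for \<beta>'
    proof (cases "strict_less r \<beta>' \<beta>")
      case True
      then have "strict_less r \<beta>' (f \<beta>)" using kb(2) by (rule sl_trans[OF wo])
      then show ?thesis using kbu by (rule bexI)
    next
      case False
      have "strict_less r \<beta>' \<alpha>" using slI[OF b'] .
      then have kk: "f \<beta>' \<in> C" "strict_less r \<beta>' (f \<beta>')" "strict_less r (f \<beta>') \<alpha>"
        using key[OF _ False] by blast+
      have "f \<beta>' \<in> C \<inter> underS r \<alpha>" using kk(1) slD[OF kk(3)] by (rule IntI)
      then show ?thesis using kk(2) by (rule bexI[rotated])
    qed
    have "(C \<inter> underS r \<alpha> \<noteq> {} \<and>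
       (\<forall>\<beta>\<in>underS r \<alpha>. \<exists>\<gamma>\<in>C \<inter> underS r \<alpha>. strict_less r \<beta> \<gamma>)) \<longrightarrow> \<alpha> \<in> C"
      using cl aK unfolding closed_in_def by (rule bspec)
    moreover have "\<forall>\<beta>\<in>underS r \<alpha>. \<exists>\<gamma>\<in>C \<inter> underS r \<alpha>. strict_less r \<beta> \<gamma>" using 2 by (rule ballI)
    ultimately show "\<alpha> \<in> C" using 1 by blast
  qed
  then show ?thesis using gD b(1) by blast
qed

lemma dom_large:
  assumes R: "reg r" and D: "dominating r D"
  shows "|Field r| \<le>o |D|"
proof (rule ccontr)
  let ?K = "Field r"
  have wo: "wo_rel r" using reg_wo[OF R] .
  assume "\<not> |Field r| \<le>o |D|"
  then have DK: "|D| <o |?K|" using not_ordLeq_iff_ordLess[OF card_of_Well_order card_of_Well_order] by blast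
  have DF: "D \<subseteq> ?K \<rightarrow>\<^sub>E ?K" using D unfolding dominating_def by blast
  define V where "V \<alpha> = (\<lambda>g. g \<alpha>) ` D" for \<alpha>
  have Vb: "\<exists>b\<in>?K. V \<alpha> \<subseteq> underS r b" if a: "\<alpha> \<in> ?K" for \<alpha>
  proof -
    have "V \<alpha> \<subseteq> ?K" using DF a unfolding V_def by blast
    moreover have "|V \<alpha>| \<le>o |D|" unfolding V_def by (rule card_of_image)
    then have "|V \<alpha>| <o |?K|" using DK by (rule ordLeq_ordLess_trans)
    ultimately show ?thesis by (rule reg_bound[OF R])
  qed
  define f where "f = (\<lambda>\<alpha>\<in>?K. SOME b. b \<in> ?K \<and> V \<alpha> \<subseteq> underS r b)"
  have fb: "f \<alpha> \<in> ?K \<and> V \<alpha> \<subseteq> underS r (f \<alpha>)" if "\<alpha> \<in> ?K" for \<alpha>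
    using someI_ex[OF Vb[OF that, unfolded Bex_def]] that unfolding f_def by simp
  have "f \<in> ?K \<rightarrow>\<^sub>E ?K" using fb unfolding f_def by auto
  then obtain g where g: "g \<in> D" "le_star r f g" using D unfolding dominating_def by blast
  have "{\<alpha> \<in> ?K. strict_less r (g \<alpha>) (f \<alpha>)} = ?K"
  proof -
    have "strict_less r (g \<alpha>) (f \<alpha>)" if "\<alpha> \<in> ?K" for \<alpha>
    proof -
      have "g \<alpha> \<in> V \<alpha>" using g(1) unfolding V_def by blast
      then have "g \<alpha> \<in> underS r (f \<alpha>)" using conjunct2[OF fb[OF that]] by (rule subsetD[rotated])
      then show ?thesis by (rule slI)
    qed
    then show ?thesis by blast
  qed
  then have "|?K| <o |?K|" using g(2) unfolding le_star_def by simp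
  then show False using ordLess_irreflexive by blast
qed


lemma pigeon:
  assumes inf: "infinite A"
    and cof: "\<And>S. cofinal_subset |A| S \<Longrightarrow> |P| <o |S|"
    and phi: "\<phi> ` Cs \<subseteq> P" and Cs: "|Cs| =o |A|"
  shows "\<exists>p\<in>P. \<not> |{X\<in>Cs. \<phi> X = p}| <o |A|"
proof (rule ccontr)
  assume "\<not> (\<exists>p\<in>P. \<not> |{X\<in>Cs. \<phi> X = p}| <o |A| )"
  then have small: "|{X\<in>Cs. \<phi> X = p}| <o |A|" if "p \<in> P" for p using that by blast
  let ?W = "|A|"
  have cW: "Card_order ?W" by (rule card_of_Card_order)
  have FW: "Field ?W = A" by (rule Field_card_of)
  have woW: "wo_rel ?W" unfolding wo_rel_def by (rule card_of_Well_order)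
  have wW: "Well_order ?W" by (rule card_of_Well_order)
  have ex: "\<exists>x\<in>A. |{X\<in>Cs. \<phi> X = p}| \<le>o |underS ?W x|" if "p \<in> P" for p
    using small_below[OF cW, of "{X\<in>Cs. \<phi> X = p}"] small[OF that] FW by simp
  define xp where "xp p = (SOME x. x \<in> A \<and> |{X\<in>Cs. \<phi> X = p}| \<le>o |underS ?W x| )" for p
  have xp: "xp p \<in> A \<and> |{X\<in>Cs. \<phi> X = p}| \<le>o |underS ?W (xp p)|" if "p \<in> P" for p
    using someI_ex[OF ex[OF that, unfolded Bex_def]] unfolding xp_def .
  have reflA: "cofinal_subset ?W A"
    unfolding cofinal_subset_def FW
  proof (intro conjI ballI)
    fix x assume "x \<in> A"
    moreover have "(x, x) \<in> ?W" using woW \<open>x \<in> A\<close> FW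
      by (metis wo_rel.REFL refl_onD)
    ultimately show "\<exists>y\<in>A. (x, y) \<in> ?W" by blast
  qed simp
  have PA: "|P| <o |A|" using cof[OF reflA] .
  have "\<not> cofinal_subset ?W (xp ` P)"
  proof
    assume "cofinal_subset ?W (xp ` P)"
    then have 1: "|P| <o |xp ` P|" by (rule cof)
    have 2: "|xp ` P| \<le>o |P|" by (rule card_of_image)
    have "|P| <o |P|" using 1 2 by (rule ordLess_ordLeq_trans)
    then show False using ordLess_irreflexive by blast
  qed
  moreover have "xp ` P \<subseteq> Field ?W" using xp FW by blast
  ultimately obtain x where x: "x \<in> A" "\<forall>y\<in>xp ` P. (x, y) \<notin> ?W"
    unfolding cofinal_subset_def FW by blast
  have below: "underS ?W (xp p) \<subseteq> underS ?W x" if p: "p \<in> P" for p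
  proof
    fix z assume z: "z \<in> underS ?W (xp p)"
    have "xp p \<in> underS ?W x"
    proof (rule ccontr)
      assume "xp p \<notin> underS ?W x"
      then have "(x, xp p) \<in> ?W" using wo_total_le[OF wW] xp[OF p] x(1) FW by blast
      then show False using x(2) p by blast
    qed
    then show "z \<in> underS ?W x" using slD[OF sl_trans[OF woW slI[OF z] slI]] by blast
  qed
  have fib: "|{X\<in>Cs. \<phi> X = p}| \<le>o |underS ?W x|" if p: "p \<in> P" for p
  proof -
    have "|underS ?W (xp p)| \<le>o |underS ?W x|" using below[OF p] by (rule card_of_mono1)
    with conjunct2[OF xp[OF p]] show ?thesis by (rule ordLeq_transitive)
  qed
  have "\<exists>\<iota>. inj_on \<iota> {X\<in>Cs. \<phi> X = p} \<and> \<iota> ` {X\<in>Cs. \<phi> X = p} \<subseteq> underS ?W x" if "p \<in> P" for p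
    using fib[OF that] card_of_ordLeq by blast
  then obtain \<iota> where io: "\<And>p. p \<in> P \<Longrightarrow> inj_on (\<iota> p) {X\<in>Cs. \<phi> X = p} \<and> \<iota> p ` {X\<in>Cs. \<phi> X = p} \<subseteq> underS ?W x"
    by metis
  define \<psi> where "\<psi> X = (\<phi> X, \<iota> (\<phi> X) X)" for X
  have "inj_on \<psi> Cs"
  proof (rule inj_onI)
    fix X Y assume XY: "X \<in> Cs" "Y \<in> Cs" "\<psi> X = \<psi> Y"
    then have e: "\<phi> X = \<phi> Y" and e2: "\<iota> (\<phi> X) X = \<iota> (\<phi> X) Y" unfolding \<psi>_def by auto
    have p: "\<phi> X \<in> P" using phi XY(1) by blast
    show "X = Y" using inj_onD[OF conjunct1[OF io[OF p]] e2] XY e by auto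
  qed
  moreover have "\<psi> ` Cs \<subseteq> P \<times> underS ?W x"
  proof
    fix z assume "z \<in> \<psi> ` Cs"
    then obtain X where X: "X \<in> Cs" "z = \<psi> X" by blast
    have p: "\<phi> X \<in> P" using phi X(1) by blast
    have "\<iota> (\<phi> X) X \<in> underS ?W x" using conjunct2[OF io[OF p]] X(1) by blast
    then show "z \<in> P \<times> underS ?W x" using X p unfolding \<psi>_def by simp
  qed
  ultimately have 1: "|Cs| \<le>o |P \<times> underS ?W x|" using card_of_ordLeq by blast
  have "|underS ?W x| <o ?W" using card_of_underS[OF cW] x(1) FW by blast
  then have "|P \<times> underS ?W x| <o |A|" using times_less[OF inf PA] by blast
  with 1 have "|Cs| <o |A|" by (rule ordLeq_ordLess_trans)
  then show False using Cs not_ordLess_ordIso by blast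
qed


theorem corollary5p6:
  fixes r :: "'a rel"
  assumes "Card_order r"
    and "\<not> countable (Field r)"
    and "|short_functions r| =o |Field r|"
    and "d_less_cf_pow r"
  shows "Gal (club_filter r) (Pow (Field r)) (Pow (Field r))"
proof -
  let ?K = "Field r"
  have inf: "infinite ?K" using assms(2) countable_finite by blast
  have RR: "\<forall>X. X \<subseteq> ?K \<and> |X| <o |?K| \<longrightarrow> (\<exists>a\<in>?K. X \<subseteq> underS r a)"
  proof (intro allI impI)
    fix X assume h: "X \<subseteq> ?K \<and> |X| <o |?K|"
    show "\<exists>a\<in>?K. X \<subseteq> underS r a"
      using regular[OF assms(1) inf assms(3) conjunct1[OF h] conjunct2[OF h]] .
  qed
  have R: "reg r" unfolding reg_def using assms(1) assms(2) RR by (intro conjI)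
  obtain D where DD: "dominating r D \<and> (\<forall>S. cofinal_subset |Pow ?K| S \<longrightarrow> |D| <o |S| )"
    using assms(4) unfolding d_less_cf_pow_def by (elim exE) (rule that)
  have D: "dominating r D" using DD by (rule conjunct1)
  have cofD: "|D| <o |S|" if "cofinal_subset |Pow ?K| S" for S
    using conjunct2[OF DD] that by blast
  have KD: "|?K| \<le>o |D|" using dom_large[OF R D] .
  have infD: "infinite D" using card_of_ordLeq_finite[OF KD] inf by blast
  have Kne: "?K \<noteq> {}" using infinite_imp_nonempty[OF inf] .
  have PD: "|D \<times> ?K| =o |D|" using card_of_Times_infinite[OF infD Kne KD] by blast
  have cofP: "|D \<times> ?K| <o |S|" if "cofinal_subset |Pow ?K| S" for S
    using PD cofD[OF that] by (rule ordIso_ordLess_trans)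
  have infP: "infinite (Pow ?K)" using inf by simp
  have DF: "D \<subseteq> ?K \<rightarrow>\<^sub>E ?K" using D unfolding dominating_def by blast
  show ?thesis unfolding Gal_def
  proof (intro allI impI)
    fix Cs assume Cs: "Cs \<subseteq> club_filter r \<and> |Cs| =o |Pow ?K|"
    have ex: "\<exists>p\<in>D \<times> ?K. club_of r (fst p) (snd p) \<subseteq> X" if X: "X \<in> Cs" for X
    proof -
      obtain C where C: "club r C" "C \<subseteq> X" using Cs X unfolding club_filter_def by blast
      obtain g \<beta> where gb: "g \<in> D" "\<beta> \<in> ?K" "club_of r g \<beta> \<subseteq> C" using club_dom[OF R D C(1)] by blast
      have "(g, \<beta>) \<in> D \<times> ?K" using gb by simp
      moreover have "club_of r (fst (g, \<beta>)) (snd (g, \<beta>)) \<subseteq> X" using gb(3) C(2) by simp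
      ultimately show ?thesis by (rule bexI[rotated])
    qed
    define \<phi> where "\<phi> X = (SOME p. p \<in> D \<times> ?K \<and> club_of r (fst p) (snd p) \<subseteq> X)" for X
    have phi: "\<phi> X \<in> D \<times> ?K \<and> club_of r (fst (\<phi> X)) (snd (\<phi> X)) \<subseteq> X" if "X \<in> Cs" for X
      using someI_ex[OF ex[OF that, unfolded Bex_def]] unfolding \<phi>_def .
    have phiP: "\<phi> ` Cs \<subseteq> D \<times> ?K" using phi by blast
    obtain p where p: "p \<in> D \<times> ?K" and big: "\<not> |{X\<in>Cs. \<phi> X = p}| <o |Pow ?K|"
      using pigeon[OF infP cofP phiP conjunct2[OF Cs]] by blast
    let ?E = "{X\<in>Cs. \<phi> X = p}"
    have "|?E| \<le>o |Cs|" by (rule card_of_mono1) blast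
    then have "|?E| \<le>o |Pow ?K|" using conjunct2[OF Cs] by (rule ordLeq_ordIso_trans)
    then have "|?E| <o |Pow ?K| \<or> |?E| =o |Pow ?K|" by (rule ordLeq_iff_ordLess_or_ordIso[THEN iffD1])
    then have Eiso: "|?E| =o |Pow ?K|" using big by blast
    have Ene: "?E \<noteq> {}"
    proof
      assume "?E = {}"
      then have "finite ?E" by (metis finite.emptyI)
      then have "|?E| <o |Pow ?K|" using infP by (rule fin_less)
      then show False using big by blast
    qed
    then obtain X0 where X0: "X0 \<in> ?E" by blast
    have X0K: "X0 \<subseteq> ?K" using X0 Cs unfolding club_filter_def by blast
    have clubp: "club r (club_of r (fst p) (snd p))"
    proof (rule club_of_club[OF R])
      have "fst p \<in> D" using p by (simp add: mem_Times_iff)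
      then have fp: "fst p \<in> ?K \<rightarrow>\<^sub>E ?K" by (rule subsetD[OF DF])
      show "\<forall>\<xi>\<in>?K. fst p \<xi> \<in> ?K"
      proof
        fix \<xi> assume "\<xi> \<in> ?K"
        then show "fst p \<xi> \<in> ?K" by (rule PiE_mem[OF fp])
      qed
      show "snd p \<in> ?K" using p by auto
    qed
    have "club_of r (fst p) (snd p) \<subseteq> \<Inter>?E"
    proof (rule Inter_greatest)
      fix X assume "X \<in> ?E"
      then have X: "X \<in> Cs" "\<phi> X = p" by auto
      show "club_of r (fst p) (snd p) \<subseteq> X" using conjunct2[OF phi[OF X(1)]] X(2) by simp
    qed
    moreover have "\<Inter>?E \<subseteq> ?K" using X0 X0K by blast
    ultimately have "\<Inter>?E \<in> club_filter r" unfolding club_filter_def using clubp by blast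
    moreover have "?E \<subseteq> Cs" by blast
    ultimately show "\<exists>E. E \<subseteq> Cs \<and> |E| =o |Pow ?K| \<and> \<Inter>E \<in> club_filter r"
      using Eiso by blast
  qed
qed

end
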